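(* Let $f:\mathbb{R}^d\to\mathbb{R}$ be convex, symmetric and sign invariant, $g(w,x)=f_\sigma(wx^\top-\bar w\bar x^\top)$, $X=wx^\top-\bar w\bar x^\top$, $Y\in\partial f_\sigma(X)$, and let $U\in O(d_1)$, $V\in O(d_2)$ (columns $U_i,V_i$) satisfy $X=U\mathrm{diag}(\sigma(X))V^\top$ and $Y=U\mathrm{diag}(\sigma(Y))V^\top$, with $d_1,d_2\ge2$. Then (1) $\max\{|\sigma_1(Y)\langle V_1,x\rangle|,|\sigma_2(Y)\langle V_2,x\rangle|\}\le\|Yx\|$ and $\max\{|\sigma_1(Y)\langle U_1,w\rangle|,|\sigma_2(Y)\langle U_2,w\rangle|\}\le\|Y^\top w\|$; (2) $g(w,x)-g(\bar w,\bar x)\le\sigma_1(Y)\sigma_1(X)+\sigma_2(Y)\sigma_2(X)$.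
   Context: Let $d=\min\{d_1,d_2\}$ and let $\sigma:\mathbb{R}^{d_1\times d_2}\to\mathbb{R}^d_+$ give singular values in nonincreasing order. $f$ is symmetric if $f(\pi s)=f(s)$ for all permutation matrices $\pi$, sign invariant if $f(Ds)=f(s)$ for all diagonal $D$ with entries in $\{\pm1\}$; $f_\sigma=f\circ\sigma$, which is convex when $f$ is, and $\partial f_\sigma(X)$ is its convex subdifferential. $\mathrm{diag}(s)$ is the $d_1\times d_2$ matrix with $s$ on the main diagonal. $\bar w\in\mathbb{R}^{d_1}$, $\bar x\in\mathbb{R}^{d_2}$ are fixed. *)

theory Defs
  imports Complex_Main "Jordan_Normal_Form.Matrix"
begin

definition orth_group :: "nat \<Rightarrow> real mat set" where
  "orth_group n = {U. U \<in> carrier_mat n n \<and> transpose_mat U * U = 1\<^sub>m n}"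

definition diag_rect :: "nat \<Rightarrow> nat \<Rightarrow> real vec \<Rightarrow> real mat" where
  "diag_rect d1 d2 s = mat d1 d2 (\<lambda>(i,j). if i = j then s $ i else 0)"

definition outer :: "real vec \<Rightarrow> real vec \<Rightarrow> real mat" where
  "outer w x = mat (dim_vec w) (dim_vec x) (\<lambda>(i,j). w $ i * x $ j)"

definition vnorm :: "real vec \<Rightarrow> real" where
  "vnorm v = sqrt (v \<bullet> v)"

definition frob_inner :: "real mat \<Rightarrow> real mat \<Rightarrow> real" where
  "frob_inner A B = (\<Sum>i<dim_row A. \<Sum>j<dim_col A. A $$ (i,j) * B $$ (i,j))"

definition sing_vals :: "real mat \<Rightarrow> real vec" where
  "sing_vals X = (THE s. s \<in> carrier_vec (min (dim_row X) (dim_col X)) \<and>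
      (\<forall>i < dim_vec s. 0 \<le> s $ i) \<and>
      (\<forall>i j. i \<le> j \<longrightarrow> j < dim_vec s \<longrightarrow> s $ j \<le> s $ i) \<and>
      (\<exists>U V. U \<in> orth_group (dim_row X) \<and> V \<in> orth_group (dim_col X) \<and>
          X = U * diag_rect (dim_row X) (dim_col X) s * transpose_mat V))"

definition f_sigma :: "(real vec \<Rightarrow> real) \<Rightarrow> real mat \<Rightarrow> real" where
  "f_sigma f X = f (sing_vals X)"

definition convex_vec :: "nat \<Rightarrow> (real vec \<Rightarrow> real) \<Rightarrow> bool" where
  "convex_vec d f \<longleftrightarrow> (\<forall>s \<in> carrier_vec d. \<forall>t \<in> carrier_vec d. \<forall>a::real. 0 \<le> a \<longrightarrow> a \<le> 1 \<longrightarrow>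
      f (a \<cdot>\<^sub>v s + (1 - a) \<cdot>\<^sub>v t) \<le> a * f s + (1 - a) * f t)"

definition symmetric_vec :: "nat \<Rightarrow> (real vec \<Rightarrow> real) \<Rightarrow> bool" where
  "symmetric_vec d f \<longleftrightarrow> (\<forall>s \<in> carrier_vec d. \<forall>p. p permutes {..<d} \<longrightarrow>
      f (vec d (\<lambda>i. s $ p i)) = f s)"

definition sign_invariant_vec :: "nat \<Rightarrow> (real vec \<Rightarrow> real) \<Rightarrow> bool" where
  "sign_invariant_vec d f \<longleftrightarrow> (\<forall>s \<in> carrier_vec d. \<forall>D :: nat \<Rightarrow> real.
      (\<forall>i<d. D i = 1 \<or> D i = -1) \<longrightarrow> f (vec d (\<lambda>i. D i * s $ i)) = f s)"

definition subdiff :: "nat \<Rightarrow> nat \<Rightarrow> (real mat \<Rightarrow> real) \<Rightarrow> real mat \<Rightarrow> real mat set" where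
  "subdiff d1 d2 h X = {Y. Y \<in> carrier_mat d1 d2 \<and>
      (\<forall>Z \<in> carrier_mat d1 d2. h Z \<ge> h X + frob_inner Y (Z - X))}"

definition g_fun :: "(real vec \<Rightarrow> real) \<Rightarrow> real vec \<Rightarrow> real vec \<Rightarrow> real vec \<Rightarrow> real vec \<Rightarrow> real" where
  "g_fun f wbar xbar w x = f_sigma f (outer w x - outer wbar xbar)"

end

theory Submission imports Defs "Jordan_Normal_Form.Jordan_Normal_Form" "HOL-Library.Multiset"
begin

lemma mult_entry:
  assumes "A \<in> carrier_mat m k" "B \<in> carrier_mat k n" "i < m" "j < n"
  shows "(A * B) $$ (i,j) = (\<Sum>l<k. A $$ (i,l) * B $$ (l,j))"
  using assms by (simp add: scalar_prod_def atLeast0LessThan)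

lemma svd_entry:
  assumes A: "A \<in> carrier_mat m m" and B: "B \<in> carrier_mat n n" and a: "a < m" and b: "b < n"
  shows "(A * diag_rect m n s * transpose_mat B) $$ (a,b) = (\<Sum>i<min m n. A$$(a,i) * s$i * B$$(b,i))"
proof -
  have D: "diag_rect m n s \<in> carrier_mat m n" by (simp add: diag_rect_def)
  have AD: "\<And>l. l < n \<Longrightarrow> (A * diag_rect m n s) $$ (a,l) = (if l < m then A$$(a,l) * s$l else 0)"
  proof -
    fix l assume l: "l < n"
    have "(A * diag_rect m n s) $$ (a,l) = (\<Sum>i<m. A $$ (a,i) * diag_rect m n s $$ (i,l))"
      using mult_entry[OF A D a l] .
    also have "\<dots> = (\<Sum>i<m. if i = l then A $$ (a,i) * s $ i else 0)"
      by (rule sum.cong, auto simp: diag_rect_def l)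
    also have "\<dots> = (if l < m then A$$(a,l) * s$l else 0)" by simp
    finally show "?thesis l" .
  qed
  have "(A * diag_rect m n s * transpose_mat B) $$ (a,b) = (\<Sum>l<n. (A * diag_rect m n s) $$ (a,l) * transpose_mat B $$ (l,b))"
    by (rule mult_entry[of _ m n]) (use A B D a b in auto)
  also have "\<dots> = (\<Sum>l<n. if l < m then A$$(a,l) * s$l * B$$(b,l) else 0)"
  proof (rule sum.cong[OF refl])
    fix l assume "l \<in> {..<n}"
    then have l: "l < n" by simp
    have "transpose_mat B $$ (l,b) = B$$(b,l)" using B b l by auto
    then show "(A * diag_rect m n s) $$ (a,l) * transpose_mat B $$ (l,b) = (if l < m then A$$(a,l) * s$l * B$$(b,l) else 0)"
      using AD[OF l] by simp
  qed
  also have "\<dots> = (\<Sum>l\<in>{..<n} \<inter> {l. l < m}. A$$(a,l) * s$l * B$$(b,l))"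
    by (simp add: sum.inter_restrict)
  also have "{..<n} \<inter> {l. l < m} = {..<min m n}" by auto
  finally show ?thesis .
qed

lemma orth_col:
  assumes U: "U \<in> orth_group m" and i: "i < m" and j: "j < m"
  shows "(\<Sum>a<m. U$$(a,i) * U$$(a,j)) = (if i = j then 1 else 0)"
proof -
  have C: "U \<in> carrier_mat m m" and E: "transpose_mat U * U = 1\<^sub>m m" using U by (auto simp: orth_group_def)
  have "(transpose_mat U * U) $$ (i,j) = (\<Sum>a<m. U$$(a,i) * U$$(a,j))"
    by (subst mult_entry[of _ m m _ m]) (use C i j in auto)
  then show ?thesis using E i j by simp
qed

lemma quad_sum:
  assumes U: "U \<in> orth_group m" and k: "k \<le> m"
  shows "(\<Sum>a<m. (\<Sum>i<k. U$$(a,i) * c i)^2) = (\<Sum>i<k. (c i)^2)"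
proof -
  have "(\<Sum>a<m. (\<Sum>i<k. U$$(a,i) * c i)^2) = (\<Sum>a<m. \<Sum>i<k. \<Sum>j<k. (U$$(a,i) * c i) * (U$$(a,j) * c j))"
    by (simp add: power2_eq_square sum_product)
  also have "\<dots> = (\<Sum>i<k. \<Sum>a<m. \<Sum>j<k. (U$$(a,i) * c i) * (U$$(a,j) * c j))"
    by (rule sum.swap)
  also have "\<dots> = (\<Sum>i<k. \<Sum>j<k. \<Sum>a<m. (U$$(a,i) * c i) * (U$$(a,j) * c j))"
    by (rule sum.cong[OF refl], rule sum.swap)
  also have "\<dots> = (\<Sum>i<k. \<Sum>j<k. c i * c j * (\<Sum>a<m. U$$(a,i) * U$$(a,j)))"
    by (simp add: sum_distrib_left mult_ac)
  also have "\<dots> = (\<Sum>i<k. \<Sum>j<k. if i = j then c i * c j else 0)"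
    using k by (intro sum.cong refl) (simp add: orth_col[OF U])
  also have "\<dots> = (\<Sum>i<k. (c i)^2)" by (simp add: power2_eq_square)
  finally show ?thesis .
qed

lemma abs_le_sqrt_sum:
  assumes "finite A" "i \<in> A" "\<And>j. j \<in> A \<Longrightarrow> 0 \<le> f j" and that: "c^2 = f i"
  shows "\<bar>c\<bar> \<le> sqrt (\<Sum>j\<in>A. f j)"
proof -
  have "f i \<le> (\<Sum>j\<in>A. f j)" by (rule member_le_sum) (use assms in auto)
  then have "sqrt (c^2) \<le> sqrt (\<Sum>j\<in>A. f j)" using that by simp
  then show ?thesis by simp
qed

lemma norm_Yx:
  assumes U: "U \<in> orth_group m" and V: "V \<in> orth_group n"
    and Y: "Y = U * diag_rect m n s * transpose_mat V" and x: "x \<in> carrier_vec n"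
  shows "vnorm (Y *\<^sub>v x) = sqrt (\<Sum>i<min m n. (s$i * (col V i \<bullet> x))^2)"
proof -
  have UC: "U \<in> carrier_mat m m" and VC: "V \<in> carrier_mat n n" using U V by (auto simp: orth_group_def)
  have YC: "Y \<in> carrier_mat m n" using Y UC VC unfolding carrier_mat_def by (simp add: diag_rect_def)
  have ent: "(Y *\<^sub>v x) $ a = (\<Sum>i<min m n. U$$(a,i) * (s$i * (col V i \<bullet> x)))" if a: "a < m" for a
  proof -
    have "(Y *\<^sub>v x) $ a = (\<Sum>b<n. Y $$ (a,b) * x $ b)"
      using YC a x by (simp add: scalar_prod_def atLeast0LessThan)
    also have "\<dots> = (\<Sum>b<n. \<Sum>i<min m n. U$$(a,i) * s$i * V$$(b,i) * x$b)"
      using svd_entry[OF UC VC a] Y by (simp add: sum_distrib_right)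
    also have "\<dots> = (\<Sum>i<min m n. U$$(a,i) * (s$i * (\<Sum>b<n. V$$(b,i) * x$b)))"
      by (subst sum.swap) (simp add: sum_distrib_left mult_ac)
    also have "\<dots> = (\<Sum>i<min m n. U$$(a,i) * (s$i * (col V i \<bullet> x)))"
      using VC x by (intro sum.cong refl) (simp add: scalar_prod_def atLeast0LessThan)
    finally show ?thesis .
  qed
  have "(Y *\<^sub>v x) \<bullet> (Y *\<^sub>v x) = (\<Sum>a<m. ((Y *\<^sub>v x) $ a)^2)"
    using YC by (simp add: scalar_prod_def atLeast0LessThan power2_eq_square)
  also have "\<dots> = (\<Sum>a<m. (\<Sum>i<min m n. U$$(a,i) * (s$i * (col V i \<bullet> x)))^2)"
    by (simp add: ent)
  also have "\<dots> = (\<Sum>i<min m n. (s$i * (col V i \<bullet> x))^2)"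
    by (rule quad_sum[OF U]) simp
  finally show ?thesis by (simp add: vnorm_def)
qed

lemma swap3: "(\<Sum>b\<in>B. \<Sum>i\<in>I. \<Sum>j\<in>J. F b i j) = (\<Sum>i\<in>I. \<Sum>j\<in>J. \<Sum>b\<in>B. (F b i j :: real))"
proof -
  have "(\<Sum>b\<in>B. \<Sum>i\<in>I. \<Sum>j\<in>J. F b i j) = (\<Sum>i\<in>I. \<Sum>b\<in>B. \<Sum>j\<in>J. F b i j)" by (rule sum.swap)
  also have "\<dots> = (\<Sum>i\<in>I. \<Sum>j\<in>J. \<Sum>b\<in>B. F b i j)" by (rule sum.cong[OF refl], rule sum.swap)
  finally show ?thesis .
qed

lemma diag_rect_transpose: "transpose_mat (diag_rect m n s) = diag_rect n m s"
  by (rule eq_matI) (auto simp: diag_rect_def)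

lemma orth_carrier: "U \<in> orth_group m \<Longrightarrow> U \<in> carrier_mat m m" by (simp add: orth_group_def)

lemma transpose_svd:
  assumes U: "U \<in> orth_group m" and V: "V \<in> orth_group n"
  shows "transpose_mat (U * diag_rect m n s * transpose_mat V) = V * diag_rect n m s * transpose_mat U"
proof -
  have UC: "U \<in> carrier_mat m m" and VC: "V \<in> carrier_mat n n" using U V by (auto simp: orth_group_def)
  have DC: "diag_rect m n s \<in> carrier_mat m n" by (simp add: diag_rect_def)
  have "transpose_mat (U * diag_rect m n s * transpose_mat V) = transpose_mat (transpose_mat V) * transpose_mat (U * diag_rect m n s)"
    by (rule transpose_mult[of _ m n _ n]) (use UC VC DC in auto)
  also have "transpose_mat (U * diag_rect m n s) = transpose_mat (diag_rect m n s) * transpose_mat U"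
    by (rule transpose_mult) (use UC DC in auto)
  moreover have "V * diag_rect n m s * transpose_mat U = V * (diag_rect n m s * transpose_mat U)"
    by (rule assoc_mult_mat[of _ n n _ m _ m]) (use UC VC in \<open>auto simp: diag_rect_def\<close>)
  ultimately show ?thesis using UC VC DC
    by (simp add: diag_rect_transpose)
qed

lemma frob_svd:
  assumes U: "U \<in> orth_group m" and V: "V \<in> orth_group n"
    and Y: "Y = U * diag_rect m n s * transpose_mat V" and X: "X = U * diag_rect m n t * transpose_mat V"
  shows "frob_inner Y X = (\<Sum>i<min m n. s$i * t$i)"
proof -
  have UC: "U \<in> carrier_mat m m" and VC: "V \<in> carrier_mat n n" using U V by (auto simp: orth_group_def)
  have YC: "Y \<in> carrier_mat m n" using Y UC VC unfolding carrier_mat_def by (simp add: diag_rect_def)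
  let ?k = "min m n"
  have inner: "(\<Sum>b<n. Y$$(a,b) * X$$(a,b)) = (\<Sum>i<?k. (U$$(a,i))^2 * (s$i * t$i))" if a: "a < m" for a
  proof -
    have "(\<Sum>b<n. Y$$(a,b) * X$$(a,b)) = (\<Sum>b<n. \<Sum>i<?k. \<Sum>j<?k. (U$$(a,i) * s$i * V$$(b,i)) * (U$$(a,j) * t$j * V$$(b,j)))"
      using svd_entry[OF UC VC a] X Y by (simp add: sum_product)
    also have "\<dots> = (\<Sum>i<?k. \<Sum>j<?k. \<Sum>b<n. (U$$(a,i) * s$i * V$$(b,i)) * (U$$(a,j) * t$j * V$$(b,j)))"
      by (rule swap3)
    also have "\<dots> = (\<Sum>i<?k. \<Sum>j<?k. (U$$(a,i) * s$i * U$$(a,j) * t$j) * (\<Sum>b<n. V$$(b,i) * V$$(b,j)))"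
      by (simp add: sum_distrib_left mult_ac)
    also have "\<dots> = (\<Sum>i<?k. \<Sum>j<?k. if i = j then (U$$(a,i) * s$i * U$$(a,j) * t$j) else 0)"
      by (intro sum.cong refl) (simp add: orth_col[OF V])
    also have "\<dots> = (\<Sum>i<?k. (U$$(a,i))^2 * (s$i * t$i))" by (simp add: power2_eq_square mult_ac)
    finally show ?thesis .
  qed
  have "frob_inner Y X = (\<Sum>a<m. \<Sum>b<n. Y$$(a,b) * X$$(a,b))"
    using YC by (simp add: frob_inner_def)
  also have "\<dots> = (\<Sum>a<m. \<Sum>i<?k. (U$$(a,i))^2 * (s$i * t$i))" by (simp add: inner)
  also have "\<dots> = (\<Sum>i<?k. (s$i * t$i) * (\<Sum>a<m. U$$(a,i) * U$$(a,i)))"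
    by (subst sum.swap) (simp add: sum_distrib_left power2_eq_square mult_ac)
  also have "\<dots> = (\<Sum>i<?k. s$i * t$i)" by (intro sum.cong refl) (simp add: orth_col[OF U])
  finally show ?thesis .
qed

lemma diag_recover:
  assumes U: "U \<in> orth_group m" and V: "V \<in> orth_group n"
    and X: "X = U * diag_rect m n s * transpose_mat V" and i: "i < m" and j: "j < n"
  shows "(\<Sum>r<m. \<Sum>t<n. U$$(r,i) * X$$(r,t) * V$$(t,j)) = (if i = j then s$i else 0)"
proof -
  have UC: "U \<in> carrier_mat m m" and VC: "V \<in> carrier_mat n n" using U V by (auto simp: orth_group_def)
  let ?k = "min m n"
  have inner: "(\<Sum>t<n. U$$(r,i) * X$$(r,t) * V$$(t,j)) = U$$(r,i) * U$$(r,j) * (if j < ?k then s$j else 0)"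
    if r: "r < m" for r
  proof -
    have "(\<Sum>t<n. U$$(r,i) * X$$(r,t) * V$$(t,j)) = (\<Sum>t<n. \<Sum>k<?k. U$$(r,i) * (U$$(r,k) * s$k * V$$(t,k)) * V$$(t,j))"
      using svd_entry[OF UC VC r] X by (simp add: sum_distrib_left sum_distrib_right)
    also have "\<dots> = (\<Sum>k<?k. \<Sum>t<n. U$$(r,i) * (U$$(r,k) * s$k * V$$(t,k)) * V$$(t,j))" by (rule sum.swap)
    also have "\<dots> = (\<Sum>k<?k. (U$$(r,i) * U$$(r,k) * s$k) * (\<Sum>t<n. V$$(t,k) * V$$(t,j)))"
      by (simp add: sum_distrib_left mult_ac)
    also have "\<dots> = (\<Sum>k<?k. if k = j then U$$(r,i) * U$$(r,k) * s$k else 0)"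
      using j by (intro sum.cong refl) (simp add: orth_col[OF V])
    also have "\<dots> = U$$(r,i) * U$$(r,j) * (if j < ?k then s$j else 0)" by simp
    finally show ?thesis .
  qed
  have "(\<Sum>r<m. \<Sum>t<n. U$$(r,i) * X$$(r,t) * V$$(t,j)) = (\<Sum>r<m. U$$(r,i) * U$$(r,j) * (if j < ?k then s$j else 0))"
    by (simp add: inner)
  also have "\<dots> = (if j < ?k then s$j else 0) * (\<Sum>r<m. U$$(r,i) * U$$(r,j))"
    by (simp add: sum_distrib_left mult_ac)
  also have "\<dots> = (if i = j then s$i else 0)"
    using i j by (auto simp: orth_col[OF U])
  finally show ?thesis .
qed

definition svp :: "real mat \<Rightarrow> real vec \<Rightarrow> bool" where
  "svp X s \<longleftrightarrow> s \<in> carrier_vec (min (dim_row X) (dim_col X)) \<and>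
      (\<forall>i < dim_vec s. 0 \<le> s $ i) \<and>
      (\<forall>i j. i \<le> j \<longrightarrow> j < dim_vec s \<longrightarrow> s $ j \<le> s $ i) \<and>
      (\<exists>U V. U \<in> orth_group (dim_row X) \<and> V \<in> orth_group (dim_col X) \<and>
          X = U * diag_rect (dim_row X) (dim_col X) s * transpose_mat V)"


lemma gram_entry:
  assumes U: "U \<in> orth_group m" and V: "V \<in> orth_group n"
    and X: "X = U * diag_rect m n s * transpose_mat V" and a: "a < m" and b: "b < m"
  shows "(X * transpose_mat X) $$ (a,b) = (\<Sum>i<min m n. U$$(a,i) * (s$i)^2 * U$$(b,i))"
proof -
  have UC: "U \<in> carrier_mat m m" and VC: "V \<in> carrier_mat n n" using U V by (auto simp: orth_group_def)
  have XC: "X \<in> carrier_mat m n" using X UC VC unfolding carrier_mat_def by (simp add: diag_rect_def)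
  let ?k = "min m n"
  have "(X * transpose_mat X) $$ (a,b) = (\<Sum>t<n. X$$(a,t) * transpose_mat X $$ (t,b))"
    by (rule mult_entry[of _ m n _ m]) (use XC a b in auto)
  also have "\<dots> = (\<Sum>t<n. X$$(a,t) * X$$(b,t))" using XC b by (intro sum.cong refl) auto
  also have "\<dots> = (\<Sum>t<n. \<Sum>i<?k. \<Sum>j<?k. (U$$(a,i) * s$i * V$$(t,i)) * (U$$(b,j) * s$j * V$$(t,j)))"
    using svd_entry[OF UC VC a] svd_entry[OF UC VC b] X by (simp add: sum_product)
  also have "\<dots> = (\<Sum>i<?k. \<Sum>j<?k. \<Sum>t<n. (U$$(a,i) * s$i * V$$(t,i)) * (U$$(b,j) * s$j * V$$(t,j)))"
    by (rule swap3)
  also have "\<dots> = (\<Sum>i<?k. \<Sum>j<?k. (U$$(a,i) * s$i * U$$(b,j) * s$j) * (\<Sum>t<n. V$$(t,i) * V$$(t,j)))"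
    by (simp add: sum_distrib_left mult_ac)
  also have "\<dots> = (\<Sum>i<?k. \<Sum>j<?k. if i = j then (U$$(a,i) * s$i * U$$(b,j) * s$j) else 0)"
    by (intro sum.cong refl) (simp add: orth_col[OF V])
  also have "\<dots> = (\<Sum>i<?k. U$$(a,i) * (s$i)^2 * U$$(b,i))" by (simp add: power2_eq_square mult_ac)
  finally show ?thesis .
qed

definition lamv :: "nat \<Rightarrow> nat \<Rightarrow> real vec \<Rightarrow> real vec" where
  "lamv m n s = vec m (\<lambda>i. if i < min m n then (s$i)^2 else 0)"

lemma gram_svd:
  assumes U: "U \<in> orth_group m" and V: "V \<in> orth_group n"
    and X: "X = U * diag_rect m n s * transpose_mat V"
  shows "X * transpose_mat X = U * diag_rect m m (lamv m n s) * transpose_mat U"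
proof -
  have UC: "U \<in> carrier_mat m m" and VC: "V \<in> carrier_mat n n" using U V by (auto simp: orth_group_def)
  have XC: "X \<in> carrier_mat m n" using X UC VC unfolding carrier_mat_def by (simp add: diag_rect_def)
  show ?thesis
  proof (rule eq_matI)
    fix a b assume "a < dim_row (U * diag_rect m m (lamv m n s) * transpose_mat U)"
      "b < dim_col (U * diag_rect m m (lamv m n s) * transpose_mat U)"
    then have a: "a < m" and b: "b < m" using UC by auto
    have "(U * diag_rect m m (lamv m n s) * transpose_mat U) $$ (a,b) = (\<Sum>i<m. U$$(a,i) * lamv m n s $ i * U$$(b,i))"
      using svd_entry[OF UC UC a b] by simp
    also have "\<dots> = (\<Sum>i<m. if i < min m n then U$$(a,i) * (s$i)^2 * U$$(b,i) else 0)"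
      by (intro sum.cong refl) (auto simp: lamv_def)
    also have "\<dots> = (\<Sum>i\<in>{..<m} \<inter> {i. i < min m n}. U$$(a,i) * (s$i)^2 * U$$(b,i))"
      by (simp add: sum.inter_restrict)
    also have "{..<m} \<inter> {i. i < min m n} = {..<min m n}" by auto
    finally show "(X * transpose_mat X) $$ (a,b) = (U * diag_rect m m (lamv m n s) * transpose_mat U) $$ (a,b)"
      using gram_entry[OF U V X a b] by simp
  qed (use XC UC in auto)
qed

lemma order_prod_linear:
  "order a (\<Prod>b\<leftarrow>xs. [:- b, 1:]) = count (mset xs) (a :: real)"
proof (induct xs)
  case (Cons b xs)
  have nz: "(\<Prod>b\<leftarrow>xs. [:- b, 1:]) \<noteq> (0 :: real poly)" by (auto simp: prod_list_zero_iff)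
  have "order a (\<Prod>b\<leftarrow>b # xs. [:- b, 1:]) = order a ([:- b, 1:] * (\<Prod>b\<leftarrow>xs. [:- b, 1:]))" by simp
  also have "\<dots> = order a ([:- b, 1:]) + order a (\<Prod>b\<leftarrow>xs. [:- b, 1:])"
  proof (rule order_mult)
    have lin: "[:- b, 1:] \<noteq> (0::real poly)" by simp
    show "[:- b, 1:] * (\<Prod>b\<leftarrow>xs. [:- b, 1:]) \<noteq> 0"
      using lin nz by (simp only: mult_eq_0_iff) blast
  qed
  also have "order a ([:- b, 1:]) = order a ([:- b, 1:]^1)" by simp
  also have "\<dots> = (if a = b then 1 else 0)" unfolding order_linear_power by auto
  finally show ?case using Cons by auto
qed simp

lemma char_poly_diag_rect:
  "char_poly (diag_rect m m (l :: real vec)) = (\<Prod>b\<leftarrow>map (\<lambda>i. l$i) [0..<m]. [:- b, 1:])"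
proof -
  have C: "diag_rect m m l \<in> carrier_mat m m" by (simp add: diag_rect_def)
  have ut: "upper_triangular (diag_rect m m l)" by (auto simp: upper_triangular_def diag_rect_def)
  have "diag_mat (diag_rect m m l) = map (\<lambda>i. l$i) [0..<m]" by (auto simp: diag_mat_def diag_rect_def)
  then show ?thesis using char_poly_upper_triangular[OF C ut] by simp
qed

lemma orth_right_inv: assumes U: "U \<in> orth_group m" shows "U * transpose_mat U = 1\<^sub>m m"
  using U mat_mult_left_right_inverse[of "transpose_mat U" m U] by (auto simp: orth_group_def)

lemma svp_unique:
  assumes s: "svp X s" and t: "svp X t"
  shows "s = t"
proof -
  define m where "m = dim_row X"
  define n where "n = dim_col X"
  let ?d = "min m n"
  have cp: "char_poly (X * transpose_mat X) = (\<Prod>b\<leftarrow>map (\<lambda>i. lamv m n r $ i) [0..<m]. [:- b, 1:])"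
    if r: "svp X r" for r
  proof -
    obtain U V where U: "U \<in> orth_group m" and V: "V \<in> orth_group n" and X: "X = U * diag_rect m n r * transpose_mat V"
      using r unfolding svp_def m_def n_def by auto
    have UC: "U \<in> carrier_mat m m" using U by (simp add: orth_group_def)
    have sim: "similar_mat (X * transpose_mat X) (diag_rect m m (lamv m n r))"
      by (rule similar_matI[of _ _ U "transpose_mat U" m])
         (use UC orth_right_inv[OF U] U gram_svd[OF U V X] in \<open>auto simp: orth_group_def diag_rect_def\<close>)
    show ?thesis using char_poly_similar[OF sim] char_poly_diag_rect by simp
  qed
  define LL where "LL = (\<lambda>r. map (\<lambda>i. lamv m n r $ i) [0..<m])"
  have mseq: "mset (LL s) = mset (LL t)"
  proof (rule multiset_eqI)
    fix a
    show "count (mset (LL s)) a = count (mset (LL t)) a"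
      using arg_cong[OF trans[OF cp[OF s, symmetric] cp[OF t]], of "order a"]
      unfolding LL_def order_prod_linear by simp
  qed
  have srt: "sorted (rev (LL r))" if r: "svp X r" for r
  proof -
    have dr: "dim_vec r = ?d" and nn: "\<And>i. i < ?d \<Longrightarrow> 0 \<le> r $ i"
      and mono: "\<And>i j. i \<le> j \<Longrightarrow> j < ?d \<Longrightarrow> r $ j \<le> r $ i"
      using r unfolding svp_def m_def n_def by auto
    have lm: "lamv m n r $ l \<le> lamv m n r $ k" if "k \<le> l" "l < m" for k l
    proof (cases "l < ?d")
      case True
      then have "r $ l \<le> r $ k" "0 \<le> r $ l" using mono[of k l] nn[of l] that by auto
      then have "(r $ l)^2 \<le> (r $ k)^2" by (simp add: power_mono)
      then show ?thesis using True that by (simp add: lamv_def)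
    next
      case False
      then show ?thesis using that by (simp add: lamv_def)
    qed
    show ?thesis unfolding sorted_iff_nth_mono
      by (auto simp: LL_def rev_nth intro!: lm)
  qed
  have "rev (LL s) = rev (LL t)"
  proof -
    have "sort (rev (LL s)) = sort (rev (LL t))"
      by (metis mseq mset_rev sorted_list_of_multiset_mset)
    then show ?thesis using sorted_sort_id[OF srt[OF s]] sorted_sort_id[OF srt[OF t]] by simp
  qed
  then have LLeq: "LL s = LL t" by simp
  have ds: "dim_vec s = ?d" and nns: "\<And>i. i < ?d \<Longrightarrow> 0 \<le> s $ i"
    and dt: "dim_vec t = ?d" and nnt: "\<And>i. i < ?d \<Longrightarrow> 0 \<le> t $ i"
    using s t unfolding svp_def m_def n_def by auto
  show ?thesis
  proof (rule eq_vecI)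
    fix i assume "i < dim_vec t"
    then have i: "i < ?d" using dt by simp
    have "LL s ! i = LL t ! i" using LLeq by simp
    then have "(s$i)^2 = (t$i)^2" using i by (simp add: LL_def lamv_def)
    then show "s $ i = t $ i" using nns[OF i] nnt[OF i] by (simp add: power2_eq_iff_nonneg)
  qed (use ds dt in simp)
qed


lemma orth_from_cols:
  assumes W: "W \<in> carrier_mat m m"
    and c: "\<And>i j. i < m \<Longrightarrow> j < m \<Longrightarrow> (\<Sum>r<m. W$$(r,i) * W$$(r,j)) = (if i = j then 1 else 0)"
  shows "W \<in> orth_group m"
proof -
  have "transpose_mat W * W = 1\<^sub>m m"
  proof (rule eq_matI)
    fix i j assume "i < dim_row (1\<^sub>m m :: real mat)" "j < dim_col (1\<^sub>m m :: real mat)"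
    then have i: "i < m" and j: "j < m" by auto
    have "(transpose_mat W * W) $$ (i,j) = (\<Sum>r<m. transpose_mat W $$ (i,r) * W $$ (r,j))"
      by (rule mult_entry[of _ m m _ m]) (use W i j in auto)
    also have "\<dots> = (\<Sum>r<m. W$$(r,i) * W$$(r,j))" using W i by (intro sum.cong refl) auto
    finally show "(transpose_mat W * W) $$ (i,j) = 1\<^sub>m m $$ (i,j)" using c[OF i j] i j by simp
  qed (use W in auto)
  then show ?thesis using W by (simp add: orth_group_def)
qed

lemma perm_lt: fixes p :: "nat \<Rightarrow> nat" assumes "p permutes {..<d}" "d \<le> k" "i < k" shows "p i < k"
proof (cases "i < d")
  case True
  then have "p i < d" using permutes_in_image[OF assms(1), of i] by simp
  then show ?thesis using assms(2) by simp
next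
  case False then show ?thesis using assms permutes_not_in[OF assms(1), of i] by auto
qed

lemma svp_exists:
  assumes U: "U \<in> orth_group m" and V: "V \<in> orth_group n"
    and X: "X = U * diag_rect m n s0 * transpose_mat V"
  shows "\<exists>s. svp X s"
proof -
  have UC: "U \<in> carrier_mat m m" and VC: "V \<in> carrier_mat n n" using U V by (auto simp: orth_group_def)
  have XC: "X \<in> carrier_mat m n" using X UC VC unfolding carrier_mat_def by (simp add: diag_rect_def)
  let ?d = "min m n"
  define L where "L = map (\<lambda>i. \<bar>s0$i\<bar>) [0..<?d]"
  define L' where "L' = rev (sort L)"
  have "mset L' = mset L" by (simp add: L'_def)
  then obtain p where p: "p permutes {..<length L}" and pl: "permute_list p L = L'"
    by (rule mset_eq_permutation)
  have p: "p permutes {..<?d}" using p by (simp add: L_def)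
  have pd: "p i < ?d" if "i < ?d" for i using perm_lt[OF p _ that] by simp
  have L'i: "L' ! i = \<bar>s0 $ p i\<bar>" if "i < ?d" for i
    using pl[symmetric] that pd[OF that] by (simp add: permute_list_def L_def)
  define s where "s = vec ?d (\<lambda>i. \<bar>s0 $ p i\<bar>)"
  define sg where "sg = (\<lambda>i. if s0 $ p i < 0 then -1 else (1::real))"
  define U' where "U' = mat m m (\<lambda>(r,i). sg i * U$$(r, p i))"
  define V' where "V' = mat n n (\<lambda>(t,i). V$$(t, p i))"
  have sg2: "sg i * sg i = 1" for i by (simp add: sg_def)
  have sgs: "sg i * \<bar>s0 $ p i\<bar> = s0 $ p i" for i by (simp add: sg_def)
  have inj: "p i = p j \<longleftrightarrow> i = j" for i j using p by (simp add: permutes_inj inj_eq)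
  have U': "U' \<in> orth_group m"
  proof (rule orth_from_cols)
    show "U' \<in> carrier_mat m m" by (simp add: U'_def)
    fix i j assume i: "i < m" and j: "j < m"
    have pi: "p i < m" and pj: "p j < m" using perm_lt[OF p] i j by auto
    have "(\<Sum>r<m. U'$$(r,i) * U'$$(r,j)) = sg i * sg j * (\<Sum>r<m. U$$(r,p i) * U$$(r,p j))"
      using i j by (simp add: U'_def sum_distrib_left mult_ac)
    also have "\<dots> = (if i = j then 1 else 0)" using orth_col[OF U pi pj] inj[of i j] sg2[of i] sg2[of j] by simp
    finally show "(\<Sum>r<m. U'$$(r,i) * U'$$(r,j)) = (if i = j then 1 else 0)" .
  qed
  have V': "V' \<in> orth_group n"
  proof (rule orth_from_cols)
    show "V' \<in> carrier_mat n n" by (simp add: V'_def)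
    fix i j assume i: "i < n" and j: "j < n"
    have pi: "p i < n" and pj: "p j < n" using perm_lt[OF p] i j by auto
    have "(\<Sum>r<n. V'$$(r,i) * V'$$(r,j)) = (\<Sum>r<n. V$$(r,p i) * V$$(r,p j))"
      using i j by (simp add: V'_def)
    also have "\<dots> = (if i = j then 1 else 0)" using orth_col[OF V pi pj] inj[of i j] by simp
    finally show "(\<Sum>r<n. V'$$(r,i) * V'$$(r,j)) = (if i = j then 1 else 0)" .
  qed
  have U'C: "U' \<in> carrier_mat m m" and V'C: "V' \<in> carrier_mat n n" by (auto simp: U'_def V'_def)
  have Xeq: "X = U' * diag_rect m n s * transpose_mat V'"
  proof (rule eq_matI)
    fix a b assume "a < dim_row (U' * diag_rect m n s * transpose_mat V')" "b < dim_col (U' * diag_rect m n s * transpose_mat V')"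
    then have a: "a < m" and b: "b < n" using U'C V'C by auto
    have "(U' * diag_rect m n s * transpose_mat V') $$ (a,b) = (\<Sum>i<?d. U'$$(a,i) * s$i * V'$$(b,i))"
      by (rule svd_entry[OF U'C V'C a b])
    also have "\<dots> = (\<Sum>i<?d. U$$(a,p i) * s0$(p i) * V$$(b,p i))"
    proof (intro sum.cong refl)
      fix i assume "i \<in> {..<?d}"
      then have i: "i < ?d" by simp
      have "U'$$(a,i) * s$i * V'$$(b,i) = (sg i * \<bar>s0 $ p i\<bar>) * U$$(a,p i) * V$$(b,p i)"
        using i a b by (simp add: U'_def V'_def s_def)
      then show "U'$$(a,i) * s$i * V'$$(b,i) = U$$(a,p i) * s0$(p i) * V$$(b,p i)"
        by (simp add: sgs)
    qed
    also have "\<dots> = (\<Sum>k<?d. U$$(a,k) * s0$k * V$$(b,k))"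
      using sum.permute[OF p, of "\<lambda>k. U$$(a,k) * s0$k * V$$(b,k)"] by (simp add: comp_def)
    also have "\<dots> = X $$ (a,b)" using svd_entry[OF UC VC a b] X by simp
    finally show "X $$ (a,b) = (U' * diag_rect m n s * transpose_mat V') $$ (a,b)" by simp
  qed (use XC U'C V'C in auto)
  have srt: "s $ j \<le> s $ i" if "i \<le> j" "j < ?d" for i j
  proof -
    have lenL: "length (sort L) = ?d" by (simp add: L_def)
    have "sort L ! (?d - Suc j) \<le> sort L ! (?d - Suc i)"
      by (rule sorted_nth_mono) (use that lenL in auto)
    then have "L' ! j \<le> L' ! i" using that lenL by (simp add: L'_def rev_nth)
    then show ?thesis using that L'i by (simp add: s_def)
  qed
  have dX: "dim_row X = m" "dim_col X = n" using XC by auto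
  have c1: "s \<in> carrier_vec ?d" by (simp add: s_def)
  have c2: "\<forall>i<dim_vec s. 0 \<le> s$i" by (simp add: s_def)
  have c3: "\<forall>i j. i \<le> j \<longrightarrow> j < dim_vec s \<longrightarrow> s$j \<le> s$i" using srt by (simp add: s_def)
  have c4: "\<exists>U V. U \<in> orth_group m \<and> V \<in> orth_group n \<and> X = U * diag_rect m n s * transpose_mat V"
    using U' V' Xeq by blast
  have "svp X s"
    unfolding svp_def dX using c1 c2 c3 c4 by blast
  then show ?thesis by blast
qed

lemma sing_vals_svp:
  assumes "U \<in> orth_group (dim_row X)" "V \<in> orth_group (dim_col X)"
    "X = U * diag_rect (dim_row X) (dim_col X) s0 * transpose_mat V"
  shows "svp X (sing_vals X)"
proof -
  have ex: "\<exists>s. svp X s" by (rule svp_exists[OF assms])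
  have "\<exists>!s. svp X s" using ex svp_unique by blast
  then have "svp X (THE s. svp X s)" by (rule theI')
  then show ?thesis unfolding sing_vals_def svp_def[symmetric] .
qed

lemma rank2_diag:
  fixes a b c e :: "nat \<Rightarrow> real"
  assumes "\<And>i j. i < 3 \<Longrightarrow> j < 3 \<Longrightarrow> i \<noteq> j \<Longrightarrow> a i * b j - c i * e j = 0"
  shows "(a 0 * b 0 - c 0 * e 0) * (a 1 * b 1 - c 1 * e 1) * (a 2 * b 2 - c 2 * e 2) = 0"
proof -
  define M where "M = (\<lambda>i j. a i * b j - c i * e j)"
  have z: "M 0 1 = 0" "M 0 2 = 0" "M 1 0 = 0" "M 1 2 = 0" "M 2 0 = 0" "M 2 1 = 0"
    using assms unfolding M_def by auto
  have "M 0 0 * (M 1 1 * M 2 2 - M 1 2 * M 2 1) - M 0 1 * (M 1 0 * M 2 2 - M 1 2 * M 2 0)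
        + M 0 2 * (M 1 0 * M 2 1 - M 1 1 * M 2 0) = 0"
    unfolding M_def by (simp add: algebra_simps)
  then have "M 0 0 * M 1 1 * M 2 2 = 0" using z by (simp add: mult_ac)
  then show ?thesis unfolding M_def .
qed

theorem lemmaB2:
  fixes d1 d2 :: nat and f :: "real vec \<Rightarrow> real"
    and w wbar x xbar :: "real vec" and X Y U V :: "real mat"
  assumes d1: "d1 \<ge> 2" and d2: "d2 \<ge> 2"
    and w: "w \<in> carrier_vec d1" and wbar: "wbar \<in> carrier_vec d1"
    and x: "x \<in> carrier_vec d2" and xbar: "xbar \<in> carrier_vec d2"
    and conv: "convex_vec (min d1 d2) f"
    and sym: "symmetric_vec (min d1 d2) f"
    and sgn: "sign_invariant_vec (min d1 d2) f"
    and X_def: "X = outer w x - outer wbar xbar"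
    and Y: "Y \<in> subdiff d1 d2 (f_sigma f) X"
    and U: "U \<in> orth_group d1" and V: "V \<in> orth_group d2"
    and svdX: "X = U * diag_rect d1 d2 (sing_vals X) * transpose_mat V"
    and svdY: "Y = U * diag_rect d1 d2 (sing_vals Y) * transpose_mat V"
  shows "max \<bar>sing_vals Y $ 0 * (col V 0 \<bullet> x)\<bar> \<bar>sing_vals Y $ 1 * (col V 1 \<bullet> x)\<bar>
           \<le> vnorm (Y *\<^sub>v x)
       \<and> max \<bar>sing_vals Y $ 0 * (col U 0 \<bullet> w)\<bar> \<bar>sing_vals Y $ 1 * (col U 1 \<bullet> w)\<bar>
           \<le> vnorm (transpose_mat Y *\<^sub>v w)
       \<and> g_fun f wbar xbar w x - g_fun f wbar xbar wbar xbar
           \<le> sing_vals Y $ 0 * sing_vals X $ 0 + sing_vals Y $ 1 * sing_vals X $ 1"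
proof (intro conjI)
  let ?sY = "sing_vals Y" and ?sX = "sing_vals X"
  let ?d = "min d1 d2"
  have d: "?d \<ge> 2" using d1 d2 by simp
  have UC: "U \<in> carrier_mat d1 d1" and VC: "V \<in> carrier_mat d2 d2" using U V by (auto simp: orth_group_def)
  have nY: "vnorm (Y *\<^sub>v x) = sqrt (\<Sum>i<?d. (?sY$i * (col V i \<bullet> x))^2)"
    by (rule norm_Yx[OF U V svdY x])
  have le1: "\<bar>?sY $ i * (col V i \<bullet> x)\<bar> \<le> vnorm (Y *\<^sub>v x)" if "i < ?d" for i
    unfolding nY by (rule abs_le_sqrt_sum[of _ i]) (use that in auto)
  show "max \<bar>?sY $ 0 * (col V 0 \<bullet> x)\<bar> \<bar>?sY $ 1 * (col V 1 \<bullet> x)\<bar> \<le> vnorm (Y *\<^sub>v x)"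
    using le1[of 0] le1[of 1] d by simp
  have tY: "transpose_mat Y = V * diag_rect d2 d1 ?sY * transpose_mat U"
  proof -
    have "transpose_mat Y = transpose_mat (U * diag_rect d1 d2 ?sY * transpose_mat V)"
      by (rule arg_cong[OF svdY])
    also have "\<dots> = V * diag_rect d2 d1 ?sY * transpose_mat U" by (rule transpose_svd[OF U V])
    finally show ?thesis .
  qed
  have nY2: "vnorm (transpose_mat Y *\<^sub>v w) = sqrt (\<Sum>i<min d2 d1. (?sY$i * (col U i \<bullet> w))^2)"
    by (rule norm_Yx[OF V U tY w])
  have le2: "\<bar>?sY $ i * (col U i \<bullet> w)\<bar> \<le> vnorm (transpose_mat Y *\<^sub>v w)" if "i < ?d" for i
    unfolding nY2 by (rule abs_le_sqrt_sum[of _ i]) (use that in auto)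
  show "max \<bar>?sY $ 0 * (col U 0 \<bullet> w)\<bar> \<bar>?sY $ 1 * (col U 1 \<bullet> w)\<bar> \<le> vnorm (transpose_mat Y *\<^sub>v w)"
    using le2[of 0] le2[of 1] d by simp
  have XC: "X \<in> carrier_mat d1 d2" using X_def w x wbar xbar unfolding carrier_mat_def by (simp add: outer_def)
  have Xent: "X $$ (r,t) = w$r * x$t - wbar$r * xbar$t" if "r < d1" "t < d2" for r t
    using X_def w x wbar xbar that by (simp add: outer_def)
  have sv: "svp X ?sX" by (rule sing_vals_svp[of U X V]) (use XC U V svdX in auto)
  then have sXd: "dim_vec ?sX = ?d" and nn: "\<And>i. i < ?d \<Longrightarrow> 0 \<le> ?sX $ i"
    and srt: "\<And>i j. i \<le> j \<Longrightarrow> j < ?d \<Longrightarrow> ?sX $ j \<le> ?sX $ i"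
    using XC unfolding svp_def by auto
  define a where "a = (\<lambda>i. \<Sum>r<d1. U$$(r,i) * w$r)"
  define c where "c = (\<lambda>i. \<Sum>r<d1. U$$(r,i) * wbar$r)"
  define b where "b = (\<lambda>j. \<Sum>t<d2. x$t * V$$(t,j))"
  define e where "e = (\<lambda>j. \<Sum>t<d2. xbar$t * V$$(t,j))"
  have rec: "(if i = j then ?sX$i else 0) = a i * b j - c i * e j" if "i < d1" "j < d2" for i j
  proof -
    have "(if i = j then ?sX$i else 0) = (\<Sum>r<d1. \<Sum>t<d2. U$$(r,i) * X$$(r,t) * V$$(t,j))"
      using diag_recover[OF U V svdX that] by simp
    also have "\<dots> = (\<Sum>r<d1. \<Sum>t<d2. (U$$(r,i) * w$r) * (x$t * V$$(t,j)) - (U$$(r,i) * wbar$r) * (xbar$t * V$$(t,j)))"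
      by (intro sum.cong refl) (simp add: Xent algebra_simps)
    also have "\<dots> = a i * b j - c i * e j"
      unfolding a_def b_def c_def e_def
      by (simp add: sum_subtractf sum_product)
    finally show ?thesis .
  qed
  have zero: "?sX $ i = 0" if "2 \<le> i" "i < ?d" for i
  proof -
    have "(a 0 * b 0 - c 0 * e 0) * (a 1 * b 1 - c 1 * e 1) * (a 2 * b 2 - c 2 * e 2) = 0"
    proof (rule rank2_diag)
      fix i' j' :: nat assume h: "i' < 3" "j' < 3" "i' \<noteq> j'"
      then have "i' < d1" "j' < d2" using that by auto
      then show "a i' * b j' - c i' * e j' = 0" using rec[of i' j'] h by simp
    qed
    then have "?sX$0 * ?sX$1 * ?sX$2 = 0" using rec[of 0 0] rec[of 1 1] rec[of 2 2] that by auto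
    moreover have "?sX$2 \<le> ?sX$1" "?sX$1 \<le> ?sX$0" "0 \<le> ?sX$2" using srt[of 1 2] srt[of 0 1] nn[of 2] that by auto
    ultimately have "?sX$2 = 0"
      by (smt (verit) mult_eq_0_iff)
    then show ?thesis using srt[of 2 i] nn[of i] that by auto
  qed
  have fr: "frob_inner Y X = (\<Sum>i<?d. ?sY$i * ?sX$i)" by (rule frob_svd[OF U V svdY svdX])
  have "{..<?d} = {0,1} \<union> {2..<?d}" using d by auto
  then have "(\<Sum>i<?d. ?sY$i * ?sX$i) = (\<Sum>i\<in>{0,1}. ?sY$i * ?sX$i) + (\<Sum>i\<in>{2..<?d}. ?sY$i * ?sX$i)"
    by (simp add: sum.union_disjoint)
  also have "(\<Sum>i\<in>{2..<?d}. ?sY$i * ?sX$i) = 0" by (intro sum.neutral) (auto simp: zero)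
  finally have fr2: "frob_inner Y X = ?sY $ 0 * ?sX $ 0 + ?sY $ 1 * ?sX $ 1" using fr by simp
  have Z: "outer wbar xbar - outer wbar xbar = 0\<^sub>m d1 d2"
    using wbar xbar by (intro eq_matI) (auto simp: outer_def)
  have YC: "Y \<in> carrier_mat d1 d2" and sub: "\<And>Z. Z \<in> carrier_mat d1 d2 \<Longrightarrow> f_sigma f Z \<ge> f_sigma f X + frob_inner Y (Z - X)"
    using Y by (auto simp: subdiff_def)
  have "f_sigma f (0\<^sub>m d1 d2) \<ge> f_sigma f X + frob_inner Y (0\<^sub>m d1 d2 - X)" by (rule sub) simp
  moreover have "frob_inner Y (0\<^sub>m d1 d2 - X) = - frob_inner Y X"
    using YC XC by (simp add: frob_inner_def sum_negf)
  ultimately show "g_fun f wbar xbar w x - g_fun f wbar xbar wbar xbar \<le> ?sY $ 0 * ?sX $ 0 + ?sY $ 1 * ?sX $ 1"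
    using fr2 Z X_def unfolding g_fun_def by simp
qed

end
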